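(* Let $Q_t$ and $Q'_t$ be two instances of the Data Collection process with the same graph, sink, sources, rate vector $\bm{J}$ and parameter $\beta$, with initial states satisfying $Q_0\preceq Q'_0$. Then for every $t\ge0$, $Q_t$ is stochastically dominated by $Q'_t$; in particular $\Pr[Q_t(v)>0]\le\Pr[Q'_t(v)>0]$ for all $v\in V\setminus\{u_s\}$.
   Context: Partial order on $(\mathbb{N}\cup\{0\})^{V\setminus\{u_s\}}$: $\bm{x}\preceq\bm{y}$ iff $\bm{x}_v\le\bm{y}_v$ for all $v$. A function $f$ on this set is increasing if $\bm{x}\preceq\bm{y}$ implies $f(\bm{x})\le f(\bm{y})$. A random vector $X$ is stochastically dominated by $Y$ if $\mathbb{E}[f(X)]\le\mathbb{E}[f(Y)]$ for every increasing $f$. Data Collection process: on a connected undirected graph $G=(V,E,w)$ with positive weights and $d_u=\sum_{v:(u,v)\in E}w_{uv}$, fix a sink $u_s\in V$ and a set of sources $V_s\subseteq V\setminus\{u_s\}$, with relative rate vector $\bm{J}$ ($\bm{J}_v>0$ for $v\in V_s$, $0$ for other $v\ne u_s$, $\bm{J}_{u_s}=-\sum_{v\ne u_s}\bm{J}_v$) and $\beta>0$ with $\beta\bm{J}_v\le1$. The process is the discrete-time Markov chain $\{Q_t\}$ on $(\mathbb{N}\cup\{0\})^{V\setminus\{u_s\}}$ ($Q_t(v)$ = queue size at $v$) where at each step each $v\in V_s$ independently generates a new packet with probability $\beta\bm{J}_v$ into its queue, and each $u\ne u_s$ with nonempty queue picks one packet and a neighbor $v$ with probability $w_{uv}/d_u$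 and transmits the packet to $v$ (added to $v$'s queue if $v\ne u_s$, removed from the system if $v=u_s$). *)

theory Defs
  imports "HOL-Probability.Probability"
begin

definition wdeg :: "'a set \<Rightarrow> ('a \<Rightarrow> 'a \<Rightarrow> real) \<Rightarrow> 'a \<Rightarrow> real" where
  "wdeg V w u = (\<Sum>v\<in>V. w u v)"

definition wedges :: "'a set \<Rightarrow> ('a \<Rightarrow> 'a \<Rightarrow> real) \<Rightarrow> ('a \<times> 'a) set" where
  "wedges V w = {(x, y). x \<in> V \<and> y \<in> V \<and> w x y > 0}"

definition wgraph_connected :: "'a set \<Rightarrow> ('a \<Rightarrow> 'a \<Rightarrow> real) \<Rightarrow> bool" where
  "wgraph_connected V w \<longleftrightarrow> (\<forall>u\<in>V. \<forall>v\<in>V. (u, v) \<in> (wedges V w)\<^sup>*)"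

definition nbr_pmf :: "'a set \<Rightarrow> ('a \<Rightarrow> 'a \<Rightarrow> real) \<Rightarrow> 'a \<Rightarrow> 'a pmf" where
  "nbr_pmf V w u = embed_pmf (\<lambda>v. if v \<in> V then w u v / wdeg V w u else 0)"

definition dc_states :: "'a set \<Rightarrow> 'a \<Rightarrow> ('a \<Rightarrow> nat) set" where
  "dc_states V s = {Q. \<forall>v. v \<notin> V - {s} \<longrightarrow> Q v = 0}"

definition dc_le :: "'a set \<Rightarrow> 'a \<Rightarrow> ('a \<Rightarrow> nat) \<Rightarrow> ('a \<Rightarrow> nat) \<Rightarrow> bool" where
  "dc_le V s x y \<longleftrightarrow> (\<forall>v\<in>V - {s}. x v \<le> y v)"

definition dc_increasing :: "'a set \<Rightarrow> 'a \<Rightarrow> (('a \<Rightarrow> nat) \<Rightarrow> real) \<Rightarrow> bool" where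
  "dc_increasing V s f \<longleftrightarrow>
     (\<forall>x\<in>dc_states V s. \<forall>y\<in>dc_states V s. dc_le V s x y \<longrightarrow> f x \<le> f y)"

text \<open>One step of the Data Collection chain. A v: arrival at v (prob beta * J v);
  T u: Some v if u (nonempty queue) transmits to v, None if u's queue is empty.\<close>
definition dc_step :: "'a set \<Rightarrow> ('a \<Rightarrow> 'a \<Rightarrow> real) \<Rightarrow> 'a \<Rightarrow> ('a \<Rightarrow> real) \<Rightarrow> real
                       \<Rightarrow> ('a \<Rightarrow> nat) \<Rightarrow> ('a \<Rightarrow> nat) pmf" where
  "dc_step V w s J \<beta> Q =
     do {
       A \<leftarrow> Pi_pmf (V - {s}) False (\<lambda>v. bernoulli_pmf (\<beta> * J v));
       T \<leftarrow> Pi_pmf (V - {s}) None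
              (\<lambda>u. if Q u > 0 then map_pmf Some (nbr_pmf V w u) else return_pmf None);
       return_pmf (\<lambda>v. if v \<in> V - {s} then
                          Q v + (if A v then 1 else 0) - (if Q v > 0 then 1 else 0)
                            + card {u \<in> V - {s}. T u = Some v}
                        else 0)
     }"

fun dc_dist :: "'a set \<Rightarrow> ('a \<Rightarrow> 'a \<Rightarrow> real) \<Rightarrow> 'a \<Rightarrow> ('a \<Rightarrow> real) \<Rightarrow> real
                 \<Rightarrow> ('a \<Rightarrow> nat) \<Rightarrow> nat \<Rightarrow> ('a \<Rightarrow> nat) pmf" where
  "dc_dist V w s J \<beta> Q0 0 = return_pmf Q0"
| "dc_dist V w s J \<beta> Q0 (Suc t) = bind_pmf (dc_dist V w s J \<beta> Q0 t) (dc_step V w s J \<beta>)"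

definition stoch_dom :: "'a set \<Rightarrow> 'a \<Rightarrow> ('a \<Rightarrow> nat) pmf \<Rightarrow> ('a \<Rightarrow> nat) pmf \<Rightarrow> bool" where
  "stoch_dom V s X Y \<longleftrightarrow>
     (\<forall>f. dc_increasing V s f \<longrightarrow>
          measure_pmf.expectation X f \<le> measure_pmf.expectation Y f)"

end

theory Submission
  imports Defs
begin

lemma Pi_mask:
  assumes fin: "finite S"
  shows "Pi_pmf S None (\<lambda>u. if P u then map_pmf Some (N u) else return_pmf None)
       = map_pmf (\<lambda>T u. if P u then T u else None) (Pi_pmf S None (\<lambda>u. map_pmf Some (N u)))"
proof -
  have "Pi_pmf S None (\<lambda>u. if P u then map_pmf Some (N u) else return_pmf None)
      = Pi_pmf S None (\<lambda>u. bind_pmf (map_pmf Some (N u)) (\<lambda>y. return_pmf (if P u then y else None)))"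
  proof (rule Pi_pmf_cong[OF refl refl])
    fix u assume "u \<in> S"
    show "(if P u then map_pmf Some (N u) else return_pmf None)
        = bind_pmf (map_pmf Some (N u)) (\<lambda>y. return_pmf (if P u then y else None))"
    proof (cases "P u")
      case True then show ?thesis by (simp add: bind_return_pmf')
    next
      case False then show ?thesis by (simp add: bind_pmf_const)
    qed
  qed
  also have "\<dots> = bind_pmf (Pi_pmf S None (\<lambda>u. map_pmf Some (N u)))
      (\<lambda>f. Pi_pmf S None (\<lambda>x. return_pmf (if P x then f x else None)))"
    using Pi_pmf_bind[OF fin, where d=None and d'=None and p="\<lambda>u. map_pmf Some (N u)"
        and q="\<lambda>x y. return_pmf (if P x then y else None)"] by simp
  also have "\<dots> = bind_pmf (Pi_pmf S None (\<lambda>u. map_pmf Some (N u)))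
      (\<lambda>f. return_pmf (\<lambda>u. if P u then f u else None))"
  proof (intro bind_pmf_cong refl)
    fix f assume "f \<in> set_pmf (Pi_pmf S None (\<lambda>u. map_pmf Some (N u)))"
    then have fS: "f \<in> {f. \<forall>x. x \<notin> S \<longrightarrow> f x = None}" by (rule subsetD[OF set_Pi_pmf_subset[OF fin]])
    have fn: "\<And>x. x \<notin> S \<Longrightarrow> f x = None" using fS by simp
    have "Pi_pmf S None (\<lambda>x. return_pmf (if P x then f x else None))
        = return_pmf (\<lambda>x. if x \<in> S then (if P x then f x else None) else None)"
      using fin by (rule Pi_pmf_return_pmf)
    also have "(\<lambda>x. if x \<in> S then (if P x then f x else None) else None) = (\<lambda>u. if P u then f u else None)"
      by (intro ext) (simp add: fn)
    finally show "Pi_pmf S None (\<lambda>x. return_pmf (if P x then f x else None)) = return_pmf (\<lambda>u. if P u then f u else None)" .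
  qed
  also have "\<dots> = map_pmf (\<lambda>T u. if P u then T u else None) (Pi_pmf S None (\<lambda>u. map_pmf Some (N u)))"
    unfolding map_pmf_def comp_def by (rule refl)
  finally show ?thesis .
qed

definition upd :: "'a set \<Rightarrow> 'a \<Rightarrow> ('a \<Rightarrow> nat) \<Rightarrow> ('a \<Rightarrow> bool) \<Rightarrow> ('a \<Rightarrow> 'a option) \<Rightarrow> 'a \<Rightarrow> nat" where
  "upd V s Q A T = (\<lambda>v. if v \<in> V - {s} then
                          Q v + (if A v then 1 else 0) - (if Q v > 0 then 1 else 0)
                            + card {u \<in> V - {s}. T u = Some v}
                        else 0)"

definition mask :: "('a \<Rightarrow> nat) \<Rightarrow> ('a \<Rightarrow> 'a option) \<Rightarrow> 'a \<Rightarrow> 'a option" where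
  "mask Q T = (\<lambda>u. if 0 < Q u then T u else None)"

definition cstep where
  "cstep V w s J \<beta> p =
     do {
       A \<leftarrow> Pi_pmf (V - {s}) False (\<lambda>v. bernoulli_pmf (\<beta> * J v));
       T \<leftarrow> Pi_pmf (V - {s}) None (\<lambda>u. map_pmf Some (nbr_pmf V w u));
       return_pmf (upd V s (fst p) A (mask (fst p) T), upd V s (snd p) A (mask (snd p) T))
     }"

fun cdist where
  "cdist V w s J \<beta> Q0 Q0' 0 = return_pmf (Q0, Q0')"
| "cdist V w s J \<beta> Q0 Q0' (Suc t) = bind_pmf (cdist V w s J \<beta> Q0 Q0' t) (cstep V w s J \<beta>)"

lemma dc_step_alt:
  "dc_step V w s J \<beta> Q = Pi_pmf (V - {s}) False (\<lambda>v. bernoulli_pmf (\<beta> * J v)) \<bind> (\<lambda>A.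
     Pi_pmf (V - {s}) None (\<lambda>u. if Q u > 0 then map_pmf Some (nbr_pmf V w u) else return_pmf None)
     \<bind> (\<lambda>T. return_pmf (upd V s Q A T)))"
  by (simp add: dc_step_def upd_def)

lemma marg_fst:
  assumes "finite V"
  shows "map_pmf fst (cstep V w s J \<beta> p) = dc_step V w s J \<beta> (fst p)"
  unfolding dc_step_alt cstep_def map_bind_pmf map_return_pmf fst_conv
  by (subst Pi_mask) (auto simp: assms bind_map_pmf mask_def)

lemma marg_snd:
  assumes "finite V"
  shows "map_pmf snd (cstep V w s J \<beta> p) = dc_step V w s J \<beta> (snd p)"
  unfolding dc_step_alt cstep_def map_bind_pmf map_return_pmf snd_conv
  by (subst Pi_mask) (auto simp: assms bind_map_pmf mask_def)

lemma cdist_fst: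
  assumes "finite V"
  shows "map_pmf fst (cdist V w s J \<beta> Q0 Q0' t) = dc_dist V w s J \<beta> Q0 t"
proof (induction t)
  case 0 then show ?case by simp
next
  case (Suc t)
  have "map_pmf fst (cdist V w s J \<beta> Q0 Q0' (Suc t))
     = cdist V w s J \<beta> Q0 Q0' t \<bind> (\<lambda>p. dc_step V w s J \<beta> (fst p))"
    by (simp add: map_bind_pmf marg_fst[OF assms])
  also have "\<dots> = map_pmf fst (cdist V w s J \<beta> Q0 Q0' t) \<bind> dc_step V w s J \<beta>"
    by (simp add: bind_map_pmf)
  finally show ?case using Suc by simp
qed

lemma cdist_snd:
  assumes "finite V"
  shows "map_pmf snd (cdist V w s J \<beta> Q0 Q0' t) = dc_dist V w s J \<beta> Q0' t"
proof (induction t)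
  case 0 then show ?case by simp
next
  case (Suc t)
  have "map_pmf snd (cdist V w s J \<beta> Q0 Q0' (Suc t))
     = cdist V w s J \<beta> Q0 Q0' t \<bind> (\<lambda>p. dc_step V w s J \<beta> (snd p))"
    by (simp add: map_bind_pmf marg_snd[OF assms])
  also have "\<dots> = map_pmf snd (cdist V w s J \<beta> Q0 Q0' t) \<bind> dc_step V w s J \<beta>"
    by (simp add: bind_map_pmf)
  finally show ?case using Suc by simp
qed

definition Inv where
  "Inv V s B p \<longleftrightarrow> fst p \<in> dc_states V s \<and> snd p \<in> dc_states V s \<and> dc_le V s (fst p) (snd p)
      \<and> (\<forall>v. snd p v \<le> B)"

lemma upd_le:
  assumes fin: "finite V" and le: "dc_le V s Q Q'"
  shows "upd V s Q A (mask Q T) v \<le> upd V s Q' A (mask Q' T) v"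
proof (cases "v \<in> V - {s}")
  case True
  have sub: "{u \<in> V - {s}. mask Q T u = Some v} \<subseteq> {u \<in> V - {s}. mask Q' T u = Some v}"
  proof -
    have "u \<in> V - {s} \<Longrightarrow> 0 < Q u \<Longrightarrow> 0 < Q' u" for u using le by (force simp: dc_le_def)
    then show ?thesis by (auto simp: mask_def split: if_splits)
  qed
  have "card {u \<in> V - {s}. mask Q T u = Some v} \<le> card {u \<in> V - {s}. mask Q' T u = Some v}"
    by (rule card_mono) (use fin sub in auto)
  moreover have "Q v \<le> Q' v" using le True by (auto simp: dc_le_def)
  ultimately show ?thesis using True by (auto simp: upd_def)
next
  case False then show ?thesis unfolding upd_def by (simp only: if_not_P[OF False] if_False order_refl)
qed

lemma upd_bound:
  assumes fin: "finite V"
  shows "upd V s Q A T v \<le> Q v + 1 + card (V - {s})"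
proof -
  have "card {u \<in> V - {s}. T u = Some v} \<le> card (V - {s})"
    by (rule card_mono) (use fin in auto)
  thus ?thesis by (auto simp: upd_def)
qed

lemma step_inv:
  assumes fin: "finite V" and inv: "Inv V s B p"
    and x: "x \<in> set_pmf (cstep V w s J \<beta> p)"
  shows "Inv V s (B + 1 + card (V - {s})) x"
proof -
  obtain A T where xe: "x = (upd V s (fst p) A (mask (fst p) T), upd V s (snd p) A (mask (snd p) T))"
    using x by (auto simp: cstep_def)
  show ?thesis
    unfolding Inv_def xe fst_conv snd_conv
  proof (intro conjI allI)
    show "upd V s (fst p) A (mask (fst p) T) \<in> dc_states V s"
         "upd V s (snd p) A (mask (snd p) T) \<in> dc_states V s"
      by (auto simp: dc_states_def upd_def)
    show "dc_le V s (upd V s (fst p) A (mask (fst p) T)) (upd V s (snd p) A (mask (snd p) T))"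
      using upd_le[OF fin, of s "fst p" "snd p"] inv by (auto simp: dc_le_def Inv_def)
    fix v
    have "snd p v \<le> B" using inv by (simp add: Inv_def)
    then show "upd V s (snd p) A (mask (snd p) T) v \<le> B + 1 + card (V - {s})"
      using upd_bound[OF fin, of s "snd p" A "mask (snd p) T" v] by linarith
  qed
qed

lemma cdist_inv:
  assumes fin: "finite V" and Q0: "Q0 \<in> dc_states V s" and Q0': "Q0' \<in> dc_states V s"
    and le0: "dc_le V s Q0 Q0'"
  shows "\<forall>p \<in> set_pmf (cdist V w s J \<beta> Q0 Q0' t).
           Inv V s (sum Q0' V + t * (1 + card (V - {s}))) p"
proof (induction t)
  case 0
  have "Q0' v \<le> sum Q0' V" for v
  proof (cases "v \<in> V")
    case True then show ?thesis using fin by (intro member_le_sum) auto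
  next
    case False then show ?thesis using Q0' by (auto simp: dc_states_def)
  qed
  then show ?case using Q0 Q0' le0 by (auto simp: Inv_def)
next
  case (Suc t)
  show ?case
  proof
    fix x assume "x \<in> set_pmf (cdist V w s J \<beta> Q0 Q0' (Suc t))"
    then obtain p where p: "p \<in> set_pmf (cdist V w s J \<beta> Q0 Q0' t)" and x: "x \<in> set_pmf (cstep V w s J \<beta> p)"
      by auto
    from step_inv[OF fin Suc[rule_format, OF p] x] show "Inv V s (sum Q0' V + Suc t * (1 + card (V - {s}))) x"
      by (simp add: algebra_simps)
  qed
qed

lemma fin_states:
  assumes fin: "finite V"
  shows "finite {f :: 'a \<Rightarrow> nat. f \<in> dc_states V s \<and> (\<forall>v. f v \<le> B)}"
proof -
  have "{f :: 'a \<Rightarrow> nat. f \<in> dc_states V s \<and> (\<forall>v. f v \<le> B)}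
       \<subseteq> (\<lambda>g v. if v \<in> V - {s} then g v else 0) ` (PiE (V - {s}) (\<lambda>_. {..B}))"
  proof
    fix f :: "'a \<Rightarrow> nat" assume f: "f \<in> {f. f \<in> dc_states V s \<and> (\<forall>v. f v \<le> B)}"
    have "f = (\<lambda>v. if v \<in> V - {s} then restrict f (V - {s}) v else 0)"
      using f by (auto simp: dc_states_def fun_eq_iff)
    moreover have "restrict f (V - {s}) \<in> PiE (V - {s}) (\<lambda>_. {..B})" using f by auto
    ultimately show "f \<in> (\<lambda>g v. if v \<in> V - {s} then g v else 0) ` (PiE (V - {s}) (\<lambda>_. {..B}))"
      by blast
  qed
  moreover have "finite (PiE (V - {s}) (\<lambda>_. {..B::nat}))" using fin by (intro finite_PiE) auto
  ultimately show ?thesis using finite_subset by blast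
qed

lemma dom_main:
  assumes fin: "finite V" and Q0: "Q0 \<in> dc_states V s" and Q0': "Q0' \<in> dc_states V s"
    and le0: "dc_le V s Q0 Q0'"
  shows "stoch_dom V s (dc_dist V w s J \<beta> Q0 t) (dc_dist V w s J \<beta> Q0' t)"
  unfolding stoch_dom_def
proof (intro allI impI)
  fix f assume inc: "dc_increasing V s f"
  define C where "C = cdist V w s J \<beta> Q0 Q0' t"
  define B where "B = sum Q0' V + t * (1 + card (V - {s}))"
  have inv: "\<forall>p\<in>set_pmf C. Inv V s B p" unfolding C_def B_def by (rule cdist_inv[OF fin Q0 Q0' le0])
  let ?F = "{f :: 'a \<Rightarrow> nat. f \<in> dc_states V s \<and> (\<forall>v. f v \<le> B)}"
  have "set_pmf C \<subseteq> ?F \<times> ?F"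
  proof
    fix p assume "p \<in> set_pmf C"
    with inv have i: "Inv V s B p" by blast
    have "fst p v \<le> B" for v
    proof (cases "v \<in> V - {s}")
      case True
      have "fst p v \<le> snd p v" using i True by (simp add: Inv_def dc_le_def)
      moreover have "snd p v \<le> B" using i by (simp add: Inv_def)
      ultimately show ?thesis by linarith
    next
      case False then show ?thesis using i by (auto simp: Inv_def dc_states_def)
    qed
    then show "p \<in> ?F \<times> ?F" using i by (cases p) (auto simp: Inv_def)
  qed
  hence finC: "finite (set_pmf C)" by (rule finite_subset) (use fin_states[OF fin] in simp)
  have "measure_pmf.expectation (dc_dist V w s J \<beta> Q0 t) f = measure_pmf.expectation C (\<lambda>p. f (fst p))"
  proof -
    have "dc_dist V w s J \<beta> Q0 t = map_pmf fst C" using cdist_fst[OF fin] unfolding C_def by simp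
    then show ?thesis by simp
  qed
  also have "\<dots> \<le> measure_pmf.expectation C (\<lambda>p. f (snd p))"
  proof (rule integral_mono_AE)
    show "integrable (measure_pmf C) (\<lambda>p. f (fst p))" "integrable (measure_pmf C) (\<lambda>p. f (snd p))"
      using finC by (auto intro: integrable_measure_pmf_finite)
    show "AE p in measure_pmf C. f (fst p) \<le> f (snd p)"
      using inv inc by (intro AE_pmfI) (auto simp: Inv_def dc_increasing_def)
  qed
  also have "\<dots> = measure_pmf.expectation (dc_dist V w s J \<beta> Q0' t) f"
  proof -
    have "dc_dist V w s J \<beta> Q0' t = map_pmf snd C" using cdist_snd[OF fin] unfolding C_def by simp
    then show ?thesis by simp
  qed
  finally show "measure_pmf.expectation (dc_dist V w s J \<beta> Q0 t) f
      \<le> measure_pmf.expectation (dc_dist V w s J \<beta> Q0' t) f" .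
qed

theorem claim1:
  fixes V :: "'a set" and w :: "'a \<Rightarrow> 'a \<Rightarrow> real" and s :: 'a and Vs :: "'a set"
    and J :: "'a \<Rightarrow> real" and \<beta> :: real and Q0 Q0' :: "'a \<Rightarrow> nat"
  assumes finV: "finite V"
    and sV: "s \<in> V"
    and w_sym: "\<And>u v. w u v = w v u"
    and w_nonneg: "\<And>u v. w u v \<ge> 0"
    and w_out: "\<And>u v. u \<notin> V \<or> v \<notin> V \<Longrightarrow> w u v = 0"
    and conn: "wgraph_connected V w"
    and Vs: "Vs \<subseteq> V - {s}"
    and J_src: "\<And>v. v \<in> Vs \<Longrightarrow> J v > 0"
    and J_other: "\<And>v. v \<in> V - {s} - Vs \<Longrightarrow> J v = 0"
    and J_sink: "J s = - (\<Sum>v\<in>V - {s}. J v)"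
    and beta_pos: "\<beta> > 0"
    and beta_J: "\<And>v. v \<in> V - {s} \<Longrightarrow> \<beta> * J v \<le> 1"
    and Q0: "Q0 \<in> dc_states V s" and Q0': "Q0' \<in> dc_states V s"
    and le0: "dc_le V s Q0 Q0'"
  shows "\<forall>t. stoch_dom V s (dc_dist V w s J \<beta> Q0 t) (dc_dist V w s J \<beta> Q0' t)
           \<and> (\<forall>v\<in>V - {s}. measure_pmf.prob (dc_dist V w s J \<beta> Q0 t) {Q. Q v > 0}
                          \<le> measure_pmf.prob (dc_dist V w s J \<beta> Q0' t) {Q. Q v > 0})"
proof (intro allI conjI ballI)
  fix t
  have sd: "stoch_dom V s (dc_dist V w s J \<beta> Q0 t) (dc_dist V w s J \<beta> Q0' t)"
    by (rule dom_main[OF finV Q0 Q0' le0])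
  then show "stoch_dom V s (dc_dist V w s J \<beta> Q0 t) (dc_dist V w s J \<beta> Q0' t)" .
  fix v assume v: "v \<in> V - {s}"
  have inc: "dc_increasing V s (indicator {Q. Q v > 0} :: _ \<Rightarrow> real)"
    using v unfolding dc_increasing_def dc_le_def indicator_def by (auto dest!: bspec[where x=v])
  have "measure_pmf.expectation (dc_dist V w s J \<beta> Q0 t) (indicator {Q. Q v > 0} :: _ \<Rightarrow> real)
     \<le> measure_pmf.expectation (dc_dist V w s J \<beta> Q0' t) (indicator {Q. Q v > 0} :: _ \<Rightarrow> real)"
    using sd inc by (auto simp: stoch_dom_def)
  then show "measure_pmf.prob (dc_dist V w s J \<beta> Q0 t) {Q. Q v > 0}
          \<le> measure_pmf.prob (dc_dist V w s J \<beta> Q0' t) {Q. Q v > 0}"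
    by simp
qed

end
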